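(* Let $G=(V,E)$ be a finite multigraph with a two-edge-connected subgraph $H=(W,F)$. If a partition $\pi$ of $V$ is such that $G^\pi$ is a cactus, then the sub-quotient $H^{\pi|_W}$ is also a cactus. Similarly, if $G$ is a directed multigraph and $G^\pi$ is an oriented cactus, then $H^{\pi|_W}$ is also an oriented cactus.
   Context: $G^\pi$ identifies the vertices in each block of $\pi$; $\pi|_W$ is the restriction of $\pi$ to $W$. A cactus is a connected multigraph in which every edge belongs to exactly one simple cycle (loops and pairs of parallel edges count as cycles); its cycles are its pads. An oriented cactus is a directed multigraph whose underlying multigraph is a cactus and whose pads are directed cycles. Two-edge-connected: connected with no cut-edge. *)

theory Defs
  imports Main "HOL-Library.Disjoint_Sets"
begin

text \<open>For undirected multigraphs the orientation
  (src, tgt) of an edge is ignored.  Loops (src e = tgt e) and parallel edges are allowed.\<close>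

definition multigraph :: "'v set \<Rightarrow> 'e set \<Rightarrow> ('e \<Rightarrow> 'v) \<Rightarrow> ('e \<Rightarrow> 'v) \<Rightarrow> bool" where
  "multigraph V E src tgt \<longleftrightarrow> finite V \<and> finite E \<and> (\<forall>e\<in>E. src e \<in> V \<and> tgt e \<in> V)"

definition subgraph :: "'v set \<Rightarrow> 'e set \<Rightarrow> 'v set \<Rightarrow> 'e set \<Rightarrow> ('e \<Rightarrow> 'v) \<Rightarrow> ('e \<Rightarrow> 'v) \<Rightarrow> bool" where
  "subgraph W F V E src tgt \<longleftrightarrow> W \<subseteq> V \<and> F \<subseteq> E \<and> (\<forall>e\<in>F. src e \<in> W \<and> tgt e \<in> W)"

definition adj :: "'e set \<Rightarrow> ('e \<Rightarrow> 'v) \<Rightarrow> ('e \<Rightarrow> 'v) \<Rightarrow> ('v \<times> 'v) set" where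
  "adj E src tgt = {(src e, tgt e) | e. e \<in> E} \<union> {(tgt e, src e) | e. e \<in> E}"

definition connected_mg :: "'v set \<Rightarrow> 'e set \<Rightarrow> ('e \<Rightarrow> 'v) \<Rightarrow> ('e \<Rightarrow> 'v) \<Rightarrow> bool" where
  "connected_mg V E src tgt \<longleftrightarrow> V \<noteq> {} \<and> (\<forall>u\<in>V. \<forall>v\<in>V. (u, v) \<in> (adj E src tgt)\<^sup>*)"

definition cut_edge :: "'e set \<Rightarrow> ('e \<Rightarrow> 'v) \<Rightarrow> ('e \<Rightarrow> 'v) \<Rightarrow> 'e \<Rightarrow> bool" where
  "cut_edge E src tgt e \<longleftrightarrow> e \<in> E \<and> (src e, tgt e) \<notin> (adj (E - {e}) src tgt)\<^sup>*"

definition two_edge_connected :: "'v set \<Rightarrow> 'e set \<Rightarrow> ('e \<Rightarrow> 'v) \<Rightarrow> ('e \<Rightarrow> 'v) \<Rightarrow> bool" where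
  "two_edge_connected V E src tgt \<longleftrightarrow>
     connected_mg V E src tgt \<and> (\<forall>e\<in>E. \<not> cut_edge E src tgt e)"

text \<open>Loops (k = 1) and pairs of parallel edges
  (k = 2) are cycles.\<close>
definition simple_cycle :: "'e set \<Rightarrow> ('e \<Rightarrow> 'v) \<Rightarrow> ('e \<Rightarrow> 'v) \<Rightarrow> 'e set \<Rightarrow> bool" where
  "simple_cycle E src tgt C \<longleftrightarrow>
     (\<exists>vs es. es \<noteq> [] \<and> length vs = length es \<and> distinct vs \<and> distinct es \<and>
        set es \<subseteq> E \<and> set es = C \<and>
        (\<forall>i < length es. {src (es!i), tgt (es!i)} = {vs!i, vs!((i+1) mod length es)}))"

definition directed_cycle :: "'e set \<Rightarrow> ('e \<Rightarrow> 'v) \<Rightarrow> ('e \<Rightarrow> 'v) \<Rightarrow> 'e set \<Rightarrow> bool" where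
  "directed_cycle E src tgt C \<longleftrightarrow>
     (\<exists>vs es. es \<noteq> [] \<and> length vs = length es \<and> distinct vs \<and> distinct es \<and>
        set es \<subseteq> E \<and> set es = C \<and>
        (\<forall>i < length es. src (es!i) = vs!i \<and> tgt (es!i) = vs!((i+1) mod length es)))"

definition cactus :: "'v set \<Rightarrow> 'e set \<Rightarrow> ('e \<Rightarrow> 'v) \<Rightarrow> ('e \<Rightarrow> 'v) \<Rightarrow> bool" where
  "cactus V E src tgt \<longleftrightarrow> connected_mg V E src tgt \<and>
     (\<forall>e\<in>E. \<exists>!C. simple_cycle E src tgt C \<and> e \<in> C)"

definition oriented_cactus :: "'v set \<Rightarrow> 'e set \<Rightarrow> ('e \<Rightarrow> 'v) \<Rightarrow> ('e \<Rightarrow> 'v) \<Rightarrow> bool" where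
  "oriented_cactus V E src tgt \<longleftrightarrow> cactus V E src tgt \<and>
     (\<forall>C. simple_cycle E src tgt C \<longrightarrow> directed_cycle E src tgt C)"

text \<open>Quotient by a partition: the block containing v; G^\<pi> has vertex set \<pi>, the same edges,
  and each endpoint replaced by its block.\<close>
definition blk :: "'v set set \<Rightarrow> 'v \<Rightarrow> 'v set" where
  "blk P v = (THE B. B \<in> P \<and> v \<in> B)"

definition restrict_partition :: "'v set set \<Rightarrow> 'v set \<Rightarrow> 'v set set" where
  "restrict_partition P W = {B \<inter> W | B. B \<in> P \<and> B \<inter> W \<noteq> {}}"

end

theory Submission
  imports Defs
begin

lemma blk_eq:
  assumes "partition_on A P" "B \<in> P" "v \<in> B"
  shows "blk P v = B"
  unfolding blk_def
proof (rule the_equality)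
  show "B \<in> P \<and> v \<in> B" using assms by auto
next
  fix B' assume "B' \<in> P \<and> v \<in> B'"
  then show "B' = B" using assms partition_onD2[OF assms(1)]
    by (meson disjointD disjoint_iff)
qed

lemma blk_in:
  assumes "partition_on A P" "v \<in> A"
  shows "blk P v \<in> P \<and> v \<in> blk P v"
proof -
  obtain B where "B \<in> P" "v \<in> B" using assms partition_onD1[OF assms(1)] by blast
  then show ?thesis using blk_eq[OF assms(1)] by auto
qed

lemma adj_sym_rtrancl:
  assumes "(a, b) \<in> (adj A s t)\<^sup>*"
  shows "(b, a) \<in> (adj A s t)\<^sup>*"
proof -
  have "(adj A s t)\<inverse> = adj A s t" unfolding adj_def by auto
  then show ?thesis using assms by (metis rtrancl_converseI rtrancl_converse)
qed

lemma adj_map_rtrancl: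
  assumes "(u, v) \<in> (adj A s t)\<^sup>*"
    and "\<forall>e\<in>A. s' e = h (s e) \<and> t' e = h (t e)"
  shows "(h u, h v) \<in> (adj A s' t')\<^sup>*"
  using assms(1)
proof (induction rule: rtrancl_induct)
  case base
  then show ?case by simp
next
  case (step y z)
  have "(h y, h z) \<in> adj A s' t'"
    using step(2) assms(2) unfolding adj_def by force
  then show ?case using step(3) by simp
qed

definition upath where
  "upath A s t u v vs es \<longleftrightarrow> length vs = Suc (length es) \<and> vs!0 = u \<and> vs!(length es) = v
     \<and> distinct vs \<and> set es \<subseteq> A \<and> (\<forall>i<length es. {s (es!i), t (es!i)} = {vs!i, vs!Suc i})"

lemma upath_exists:
  assumes "(u, v) \<in> (adj A s t)\<^sup>*"
  shows "\<exists>vs es. upath A s t u v vs es"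
  using assms
proof (induction rule: rtrancl_induct)
  case base
  have "upath A s t u u [u] []" unfolding upath_def by simp
  then show ?case by blast
next
  case (step v w)
  obtain vs es where p: "upath A s t u v vs es" using step(3) by blast
  obtain d where d: "d \<in> A" "{s d, t d} = {v, w}" using step(2) unfolding adj_def by blast
  show ?case
  proof (cases "w \<in> set vs")
    case True
    then obtain j where j: "j < length vs" "vs!j = w" by (metis in_set_conv_nth)
    have "upath A s t u w (take (Suc j) vs) (take j es)"
      using p j unfolding upath_def
      by (auto dest: in_set_takeD)
    then show ?thesis by blast
  next
    case False
    let ?n = "length es"
    have "upath A s t u w (vs @ [w]) (es @ [d])"
      unfolding upath_def
    proof (intro conjI allI impI)
      show "length (vs @ [w]) = Suc (length (es @ [d]))" using p unfolding upath_def by simp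
      show "(vs @ [w]) ! 0 = u" using p unfolding upath_def by (simp add: nth_append)
      show "(vs @ [w]) ! length (es @ [d]) = w" using p unfolding upath_def by (simp add: nth_append)
      show "distinct (vs @ [w])" using p False unfolding upath_def by simp
      show "set (es @ [d]) \<subseteq> A" using p d unfolding upath_def by simp
    next
      fix i assume i: "i < length (es @ [d])"
      show "{s ((es @ [d]) ! i), t ((es @ [d]) ! i)} = {(vs @ [w]) ! i, (vs @ [w]) ! Suc i}"
      proof (cases "i < ?n")
        case True
        then show ?thesis using p unfolding upath_def by (auto simp: nth_append)
      next
        case False
        then have "i = ?n" using i by simp
        then show ?thesis using p d unfolding upath_def by (auto simp: nth_append)
      qed
    qed
    then show ?thesis by blast
  qed
qed

lemma upath_distinct_es:
  assumes "upath A s t u v vs es"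
  shows "distinct es"
proof -
  have "es!i \<noteq> es!j" if "i < j" "j < length es" for i j
  proof
    assume eq: "es!i = es!j"
    have "{vs!i, vs!Suc i} = {vs!j, vs!Suc j}"
      using assms that eq unfolding upath_def by (metis less_trans)
    then have "vs!i = vs!j \<or> vs!i = vs!Suc j" by blast
    moreover have "distinct vs" "length vs = Suc (length es)" using assms unfolding upath_def by auto
    ultimately show False using that by (simp add: nth_eq_iff_index_eq)
  qed
  then show ?thesis unfolding distinct_conv_nth
    by (metis linorder_neqE_nat)
qed

lemma cycle_exists:
  assumes "e \<in> A" "(t e, s e) \<in> (adj (A - {e}) s t)\<^sup>*"
  shows "\<exists>C. simple_cycle A s t C \<and> e \<in> C"
proof -
  obtain vs es where p: "upath (A - {e}) s t (t e) (s e) vs es"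
    using upath_exists[OF assms(2)] by blast
  have de: "distinct es" using upath_distinct_es[OF p] .
  let ?n = "length es"
  have "simple_cycle A s t (set (es @ [e]))"
    unfolding simple_cycle_def
  proof (intro exI[of _ vs] exI[of _ "es @ [e]"] conjI allI impI)
    show "es @ [e] \<noteq> []" by simp
    show "length vs = length (es @ [e])" using p unfolding upath_def by simp
    show "distinct vs" using p unfolding upath_def by simp
    show "distinct (es @ [e])" using p de unfolding upath_def by auto
    show "set (es @ [e]) \<subseteq> A" using p assms(1) unfolding upath_def by auto
    show "set (es @ [e]) = set (es @ [e])" by simp
  next
    fix i assume i: "i < length (es @ [e])"
    show "{s ((es @ [e]) ! i), t ((es @ [e]) ! i)} = {vs ! i, vs ! ((i + 1) mod length (es @ [e]))}"
    proof (cases "i < ?n")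
      case True
      then show ?thesis using p unfolding upath_def by (auto simp: nth_append)
    next
      case False
      then have "i = ?n" using i by simp
      then show ?thesis using p unfolding upath_def by (auto simp: nth_append)
    qed
  qed
  then show ?thesis by auto
qed

lemma simple_cycle_map:
  assumes "simple_cycle F s t C" "F \<subseteq> E"
    and "\<forall>e\<in>F. s' e = h (s e) \<and> t' e = h (t e)"
    and "inj_on h (s ` F \<union> t ` F)"
  shows "simple_cycle E s' t' C"
proof -
  obtain vs es where c: "es \<noteq> []" "length vs = length es" "distinct vs" "distinct es"
    "set es \<subseteq> F" "set es = C"
    "\<forall>i < length es. {s (es!i), t (es!i)} = {vs!i, vs!((i+1) mod length es)}"
    using assms(1) unfolding simple_cycle_def by blast
  have sub: "set vs \<subseteq> s ` F \<union> t ` F"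
  proof
    fix x assume "x \<in> set vs"
    then obtain i where i: "i < length vs" "vs!i = x" by (metis in_set_conv_nth)
    have "es!i \<in> F" using c i by auto
    moreover have "x \<in> {s (es!i), t (es!i)}" using c i by auto
    ultimately show "x \<in> s ` F \<union> t ` F" by auto
  qed
  show ?thesis unfolding simple_cycle_def
  proof (intro exI[of _ "map h vs"] exI[of _ es] conjI allI impI)
    show "distinct (map h vs)" using c sub assms(4) by (simp add: distinct_map inj_on_subset)
    fix i assume i: "i < length es"
    have "es!i \<in> F" using c i by auto
    then have "{s' (es!i), t' (es!i)} = h ` {s (es!i), t (es!i)}" using assms(3) by auto
    also have "\<dots> = h ` {vs!i, vs!((i+1) mod length es)}" using c i by simp
    also have "\<dots> = {map h vs ! i, map h vs ! ((i+1) mod length es)}"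
      using c i by auto
    finally show "{s' (es!i), t' (es!i)} = {map h vs ! i, map h vs ! ((i+1) mod length es)}" .
  qed (use c assms(2) in auto)
qed

lemma directed_cycle_back:
  assumes "directed_cycle E s' t' C" "C \<subseteq> F"
    and "\<forall>e\<in>F. s' e = h (s e) \<and> t' e = h (t e)"
    and "inj_on h (s ` F \<union> t ` F)"
  shows "directed_cycle F s t C"
proof -
  obtain vs es where c: "es \<noteq> []" "length vs = length es" "distinct vs" "distinct es"
    "set es \<subseteq> E" "set es = C"
    "\<forall>i < length es. s' (es!i) = vs!i \<and> t' (es!i) = vs!((i+1) mod length es)"
    using assms(1) unfolding directed_cycle_def by blast
  have inF: "\<And>i. i < length es \<Longrightarrow> es!i \<in> F" using c assms(2) by auto
  have vs_eq: "vs = map h (map s es)"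
    by (rule nth_equalityI) (use c inF assms(3) in auto)
  show ?thesis unfolding directed_cycle_def
  proof (intro exI[of _ "map s es"] exI[of _ es] conjI allI impI)
    show "distinct (map s es)" using c vs_eq by (metis distinct_map)
    show "set es \<subseteq> F" using c assms(2) by auto
    fix i assume i: "i < length es"
    show "s (es ! i) = map s es ! i" using i by simp
    let ?j = "(i+1) mod length es"
    have j: "?j < length es" using c by simp
    have "h (t (es!i)) = t' (es!i)" using inF[OF i] assms(3) by auto
    also have "\<dots> = vs!?j" using c i by auto
    also have "\<dots> = s' (es!?j)" using c j by auto
    also have "\<dots> = h (s (es!?j))" using inF[OF j] assms(3) by auto
    finally have "h (t (es!i)) = h (s (es!?j))" .
    moreover have "t (es!i) \<in> s ` F \<union> t ` F" "s (es!?j) \<in> s ` F \<union> t ` F"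
      using inF[OF i] inF[OF j] by auto
    ultimately have "t (es!i) = s (es!?j)" using assms(4) by (meson inj_onD)
    then show "t (es ! i) = map s es ! ?j" using j by simp
  qed (use c in auto)
qed

theorem corollary2p15:
  fixes V W :: "'v set" and E F :: "'e set" and src tgt :: "'e \<Rightarrow> 'v" and P :: "'v set set"
  assumes "multigraph V E src tgt"
    and "subgraph W F V E src tgt"
    and "two_edge_connected W F src tgt"
    and "partition_on V P"
  shows "(cactus P E (blk P \<circ> src) (blk P \<circ> tgt) \<longrightarrow>
            cactus (restrict_partition P W) F
              (blk (restrict_partition P W) \<circ> src) (blk (restrict_partition P W) \<circ> tgt))
       \<and> (oriented_cactus P E (blk P \<circ> src) (blk P \<circ> tgt) \<longrightarrow>
            oriented_cactus (restrict_partition P W) F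
              (blk (restrict_partition P W) \<circ> src) (blk (restrict_partition P W) \<circ> tgt))"
proof -
  define Q where "Q = restrict_partition P W"
  have WV: "W \<subseteq> V" and FE: "F \<subseteq> E" and FW: "\<forall>e\<in>F. src e \<in> W \<and> tgt e \<in> W"
    using assms(2) unfolding subgraph_def by auto
  have pP: "partition_on V P" by fact
  have pQ: "partition_on W Q"
  proof (rule partition_onI)
    show "\<Union>Q = W" unfolding Q_def restrict_partition_def
    proof
      show "W \<subseteq> \<Union>{B \<inter> W |B. B \<in> P \<and> B \<inter> W \<noteq> {}}"
      proof
        fix w assume "w \<in> W"
        then have "blk P w \<in> P \<and> w \<in> blk P w" using blk_in[OF pP] WV by auto
        then show "w \<in> \<Union>{B \<inter> W |B. B \<in> P \<and> B \<inter> W \<noteq> {}}" using \<open>w \<in> W\<close> by blast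
      qed
    qed blast
  next
    fix p q assume "p \<in> Q" "q \<in> Q" "p \<noteq> q"
    then obtain B1 B2 where "p = B1 \<inter> W" "q = B2 \<inter> W" "B1 \<in> P" "B2 \<in> P"
      unfolding Q_def restrict_partition_def by blast
    then show "disjnt p q" using \<open>p \<noteq> q\<close> partition_onD2[OF pP]
      by (metis disjnt_def disjointD inf_bot_left inf_commute inf_left_commute)
  next
    show "{} \<notin> Q" unfolding Q_def restrict_partition_def by blast
  qed
  have bQ: "blk Q w = blk P w \<inter> W" if "w \<in> W" for w
  proof -
    have "blk P w \<in> P \<and> w \<in> blk P w" using blk_in[OF pP] WV that by auto
    then have "blk P w \<inter> W \<in> Q" unfolding Q_def restrict_partition_def using that by blast
    then show ?thesis using blk_eq[OF pQ] that \<open>blk P w \<in> P \<and> w \<in> blk P w\<close> by blast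
  qed
  define h where "h q = blk P (SOME w. w \<in> q)" for q
  have hQ: "h (blk Q w) = blk P w" if "w \<in> W" for w
  proof -
    have wP: "blk P w \<in> P \<and> w \<in> blk P w" using blk_in[OF pP] WV that by auto
    have "\<exists>x. x \<in> blk Q w" using bQ[OF that] wP that by blast
    then have "(SOME x. x \<in> blk Q w) \<in> blk Q w" by (rule someI_ex)
    then have "(SOME x. x \<in> blk Q w) \<in> blk P w" using bQ[OF that] by blast
    then have "blk P (SOME x. x \<in> blk Q w) = blk P w" using blk_eq[OF pP] wP by blast
    then show ?thesis unfolding h_def .
  qed
  let ?s = "blk Q \<circ> src" and ?t = "blk Q \<circ> tgt"
  have imgW: "?s ` F \<union> ?t ` F \<subseteq> blk Q ` W" using FW by auto
  have inj: "inj_on h (?s ` F \<union> ?t ` F)"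
  proof (rule inj_on_subset[OF _ imgW], rule inj_onI)
    fix x y assume "x \<in> blk Q ` W" "y \<in> blk Q ` W" "h x = h y"
    then obtain w1 w2 where "w1 \<in> W" "w2 \<in> W" "x = blk Q w1" "y = blk Q w2" by blast
    then show "x = y" using hQ bQ \<open>h x = h y\<close> by auto
  qed
  have eqs: "\<forall>e\<in>F. (blk P \<circ> src) e = h (?s e) \<and> (blk P \<circ> tgt) e = h (?t e)"
    using FW hQ by auto
  have conn: "connected_mg Q F ?s ?t"
  proof -
    have W0: "W \<noteq> {}" and cW: "\<forall>u\<in>W. \<forall>v\<in>W. (u, v) \<in> (adj F src tgt)\<^sup>*"
      using assms(3) unfolding two_edge_connected_def connected_mg_def by auto
    have Q0: "Q \<noteq> {}" using pQ W0 partition_onD1[OF pQ] by auto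
    have rep: "\<exists>w\<in>W. q = blk Q w" if qQ: "q \<in> Q" for q
    proof -
      obtain w where "w \<in> q" using qQ partition_onD3[OF pQ] by fastforce
      moreover have "w \<in> W" using \<open>w \<in> q\<close> qQ partition_onD1[OF pQ] by blast
      ultimately show ?thesis using blk_eq[OF pQ qQ] by auto
    qed
    show ?thesis unfolding connected_mg_def
    proof (intro conjI ballI)
      fix q1 q2 assume "q1 \<in> Q" "q2 \<in> Q"
      then obtain w1 w2 where "w1 \<in> W" "w2 \<in> W" "q1 = blk Q w1" "q2 = blk Q w2"
        using rep by blast
      then show "(q1, q2) \<in> (adj F ?s ?t)\<^sup>*"
        using adj_map_rtrancl[of w1 w2 F src tgt ?s "blk Q" ?t] cW by auto
    qed (rule Q0)
  qed
  have ex: "\<exists>C. simple_cycle F ?s ?t C \<and> e \<in> C" if "e \<in> F" for e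
  proof -
    have "(src e, tgt e) \<in> (adj (F - {e}) src tgt)\<^sup>*"
      using assms(3) that unfolding two_edge_connected_def cut_edge_def by auto
    then have "(tgt e, src e) \<in> (adj (F - {e}) src tgt)\<^sup>*" by (rule adj_sym_rtrancl)
    then have "(blk Q (tgt e), blk Q (src e)) \<in> (adj (F - {e}) ?s ?t)\<^sup>*"
      using adj_map_rtrancl[of "tgt e" "src e" "F - {e}" src tgt ?s "blk Q" ?t] by auto
    then show ?thesis using cycle_exists[of e F ?t ?s] that by auto
  qed
  have mapc: "simple_cycle E (blk P \<circ> src) (blk P \<circ> tgt) C" if "simple_cycle F ?s ?t C" for C
    using simple_cycle_map[OF that FE eqs inj] .
  have part1: "cactus Q F ?s ?t" if "cactus P E (blk P \<circ> src) (blk P \<circ> tgt)"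
    unfolding cactus_def
  proof (intro conjI ballI conn)
    fix e assume "e \<in> F"
    then obtain C where C: "simple_cycle F ?s ?t C" "e \<in> C" using ex by blast
    show "\<exists>!C. simple_cycle F ?s ?t C \<and> e \<in> C"
    proof (rule ex1I[of _ C])
      show "simple_cycle F ?s ?t C \<and> e \<in> C" using C by blast
    next
      fix C' assume C': "simple_cycle F ?s ?t C' \<and> e \<in> C'"
      have "e \<in> E" using \<open>e \<in> F\<close> FE by auto
      then have "\<exists>!C. simple_cycle E (blk P \<circ> src) (blk P \<circ> tgt) C \<and> e \<in> C"
        using that unfolding cactus_def by blast
      then show "C' = C" using mapc C C' by blast
    qed
  qed
  have part2: "oriented_cactus Q F ?s ?t" if "oriented_cactus P E (blk P \<circ> src) (blk P \<circ> tgt)"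
    unfolding oriented_cactus_def
  proof (intro conjI allI impI)
    show "cactus Q F ?s ?t" using part1 that unfolding oriented_cactus_def by blast
  next
    fix C assume C: "simple_cycle F ?s ?t C"
    have "C \<subseteq> F" using C unfolding simple_cycle_def by blast
    have "directed_cycle E (blk P \<circ> src) (blk P \<circ> tgt) C"
      using that mapc[OF C] unfolding oriented_cactus_def by blast
    then show "directed_cycle F ?s ?t C"
      using directed_cycle_back[OF _ \<open>C \<subseteq> F\<close> eqs inj] by blast
  qed
  show ?thesis using part1 part2 unfolding Q_def by blast
qed

end
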